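(* Let $m\ge2$ and $f_1,\dots,f_m:X\to\mathbb R_{+\infty}$ with $\bigcap_{i=1}^m\operatorname{dom} f_i\ne\emptyset$. Consider: (i) there is $K>1$ such that $\partial_\varepsilon(\sum_i f_i)(x)\subset\sum_{i=1}^m\partial_{K\varepsilon}f_i(x)$ for all $x\in\bigcap_i\operatorname{dom} f_i$ and $\varepsilon>0$; (ii) there is $K>0$ such that $\operatorname{cl}\big(\sum_{i=1}^m\partial_\varepsilon f_i(x)\big)\subset\sum_{i=1}^m\partial_{K\varepsilon}f_i(x)$ for all $x\in\bigcap_i\operatorname{dom} f_i$ and $\varepsilon>0$; (iii) for all $x\in X$ and $\varepsilon\ge0$, $\partial_\varepsilon(\sum_i f_i)(x)=\bigcap_{\eta>0}\bigcup_{\varepsilon_i\ge0,\ \sum_i\varepsilon_i=\varepsilon+\eta}\sum_{i=1}^m\partial_{\varepsilon_i}f_i(x)$; (iv) $(\sum_{i=1}^m f_i)^*=f_1^*\square\cdots\square f_m^*$; (v) $f_1^*\square\cdots\square f_m^*$ is lower semicontinuous on $\mathcal L$. Then (i)$\Leftrightarrow$(iii)$\Leftrightarrow$(iv)$\Rightarrow$(v)$\Rightarrow$(ii). If moreover, for all $x\in\bigcap_i\operatorname{dom} f_i$ and $\varepsilon\ge0$, $\partial_\varepsilon(\sum_i f_i)(x)=\bigcap_{\eta>0}\operatorname{cl}\big(\bigcup_{\varepsilon_i\ge0,\ \sum_i\varepsilon_i=\varepsilon+\eta}\sum_{i=1}^m\partial_{\varepsilon_i}f_i(x)\big)$ (which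 holds in particular if $\operatorname{cl}(\sum_i\operatorname{epi} f_i^* )=\operatorname{epi}(\sum_i f_i)^*$), then all five properties are equivalent.
   Context: $X$ is a nonempty set; $\mathbb R_{+\infty}=\mathbb R\cup\{+\infty\}$. $\mathcal L$ is a family of functions $X\to\mathbb R$ closed under pointwise addition and real scalar multiplication, equipped with the pointwise convergence topology (weakest topology making all evaluations $l\mapsto l(x)$ continuous); $\mathcal L\times\mathbb R$ has the product topology; $\operatorname{cl}$ denotes closure. For $f:X\to\mathbb R_{+\infty}$: $\operatorname{dom} f=\{x:f(x)<+\infty\}$; $f^*(l)=\sup_{x\in X}(l(x)-f(x))$; $\operatorname{epi} f^*=\{(l,r):f^*(l)\le r\}$. Infimal convolution: $(g_1\square\cdots\square g_m)(l)=\inf\{\sum_i g_i(l_i):l_i\in\mathcal L,\ \sum_i l_i=l\}$. For $\varepsilon\ge0$ and $x\in\operatorname{dom} f$, $\partial_\varepsilon f(x)=\{l\in\mathcal L: f(y)-f(x)-(l(y)-l(x))+\varepsilon\ge0\ \forall y\in X\}$, and $\emptyset$ if $x\notin\operatorname{dom} f$. Sums of sets are Minkowski sums. *)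

theory Defs
  imports "HOL-Analysis.Analysis" "HOL-Library.Function_Algebras"
begin

definition edom :: "('a \<Rightarrow> ereal) \<Rightarrow> 'a set" where
  "edom f = {x. f x < \<infinity>}"

definition fconj :: "('a \<Rightarrow> ereal) \<Rightarrow> ('a \<Rightarrow> real) \<Rightarrow> ereal" where
  "fconj f l = (SUP x. ereal (l x) - f x)"

definition epi :: "('a \<Rightarrow> real) set \<Rightarrow> (('a \<Rightarrow> real) \<Rightarrow> ereal) \<Rightarrow> (('a \<Rightarrow> real) \<times> real) set" where
  "epi L g = {(l, r). l \<in> L \<and> g l \<le> ereal r}"

definition msum :: "nat \<Rightarrow> (nat \<Rightarrow> 'b::comm_monoid_add set) \<Rightarrow> 'b set" where
  "msum m A = {s. \<exists>v. (\<forall>i\<in>{1..m}. v i \<in> A i) \<and> s = (\<Sum>i\<in>{1..m}. v i)}"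

definition infconv :: "('a \<Rightarrow> real) set \<Rightarrow> nat \<Rightarrow> (nat \<Rightarrow> ('a \<Rightarrow> real) \<Rightarrow> ereal) \<Rightarrow> ('a \<Rightarrow> real) \<Rightarrow> ereal" where
  "infconv L m g l = (INF v \<in> {v. (\<forall>i\<in>{1..m}. v i \<in> L) \<and> (\<Sum>i\<in>{1..m}. v i) = l}. \<Sum>i\<in>{1..m}. g i (v i))"

definition esubdiff :: "('a \<Rightarrow> real) set \<Rightarrow> ('a \<Rightarrow> ereal) \<Rightarrow> real \<Rightarrow> 'a \<Rightarrow> ('a \<Rightarrow> real) set" where
  "esubdiff L f \<epsilon> x = (if x \<in> edom f then
     {l \<in> L. \<forall>y. f y - f x - ereal (l y - l x) + ereal \<epsilon> \<ge> 0} else {})"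

text \<open>Lower semicontinuity on L (topology of pointwise convergence = subspace of the product
  topology on 'a \<Rightarrow> real): all sublevel sets are closed in L.\<close>
definition lsc_on :: "('a \<Rightarrow> real) set \<Rightarrow> (('a \<Rightarrow> real) \<Rightarrow> ereal) \<Rightarrow> bool" where
  "lsc_on L g \<longleftrightarrow> (\<forall>r::real. closedin (top_of_set L) {l \<in> L. g l \<le> ereal r})"

definition fsum :: "nat \<Rightarrow> (nat \<Rightarrow> 'a \<Rightarrow> ereal) \<Rightarrow> 'a \<Rightarrow> ereal" where
  "fsum m f = (\<lambda>x. \<Sum>i\<in>{1..m}. f i x)"

definition cdom :: "nat \<Rightarrow> (nat \<Rightarrow> 'a \<Rightarrow> ereal) \<Rightarrow> 'a set" where
  "cdom m f = (\<Inter>i\<in>{1..m}. edom (f i))"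

end

theory Submission
  imports Defs
begin


lemma sum_fun_apply: "(\<Sum>i\<in>A. (v i :: 'a \<Rightarrow> 'b::comm_monoid_add)) x = (\<Sum>i\<in>A. v i x)"
  by (induction A rule: infinite_finite_induct) auto

lemma sum_in_L:
  assumes L_add: "\<And>l1 l2. l1 \<in> L \<Longrightarrow> l2 \<in> L \<Longrightarrow> (\<lambda>x. l1 x + l2 x) \<in> L"
  shows "finite A \<Longrightarrow> A \<noteq> {} \<Longrightarrow> \<forall>i\<in>A. v i \<in> L \<Longrightarrow> (\<Sum>i\<in>A. v i) \<in> L"
proof (induction A rule: finite_ne_induct)
  case (singleton x) then show ?case by simp
next
  case (insert x F)
  then have "(\<lambda>y. v x y + (\<Sum>i\<in>F. v i) y) \<in> L" by (intro L_add) auto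
  then show ?case using insert by (simp add: plus_fun_def)
qed

lemma esub_iff:
  assumes "\<And>y. g y \<noteq> -\<infinity>"
  shows "l \<in> esubdiff L g e x \<longleftrightarrow> l \<in> L \<and> g x \<noteq> \<infinity> \<and> fconj g l \<le> ereal (l x) - g x + ereal e"
proof (cases "g x")
  case (real a)
  have "(g y - g x - ereal (l y - l x) + ereal e \<ge> 0) \<longleftrightarrow> ereal (l y) - g y \<le> ereal (l x) - g x + ereal e" for y
    using assms[of y] by (cases "g y") (auto simp: real)
  then show ?thesis using real
    by (auto simp: esubdiff_def edom_def fconj_def SUP_le_iff)
next
  case PInf then show ?thesis by (simp add: esubdiff_def edom_def)
next
  case MInf then show ?thesis using assms by simp
qed

lemma esub_mono:
  assumes "\<And>y. g y \<noteq> -\<infinity>" "e \<le> e'"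
  shows "esubdiff L g e x \<subseteq> esubdiff L g e' x"
proof
  fix l assume "l \<in> esubdiff L g e x"
  then have "l \<in> L" "g x \<noteq> \<infinity>" "fconj g l \<le> ereal (l x) - g x + ereal e"
    using esub_iff[where g=g, OF assms(1)] by auto
  moreover have "ereal (l x) - g x + ereal e \<le> ereal (l x) - g x + ereal e'"
    using assms(2) by (intro add_left_mono) simp
  ultimately show "l \<in> esubdiff L g e' x" using esub_iff[where g=g, OF assms(1)] by (meson order_trans)
qed

lemma esub_eps:
  assumes "\<And>y. g y \<noteq> -\<infinity>" "\<And>\<eta>. \<eta> > 0 \<Longrightarrow> l \<in> esubdiff L g (e + \<eta>) x"
  shows "l \<in> esubdiff L g e x"
proof -
  have h: "l \<in> L \<and> g x \<noteq> \<infinity> \<and> fconj g l \<le> ereal (l x) - g x + ereal (e + \<eta>)" if "\<eta> > 0" for \<eta>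
    using assms(2)[OF that] esub_iff[where g=g, OF assms(1)] by blast
  then have "l \<in> L" "g x \<noteq> \<infinity>" using h[of 1] by auto
  moreover have "fconj g l \<le> ereal (l x) - g x + ereal e"
  proof (rule ereal_le_epsilon2)
    fix \<eta> :: real assume "\<eta> > 0"
    then show "fconj g l \<le> ereal (l x) - g x + ereal e + ereal \<eta>"
      using h[of \<eta>] by (simp add: add.assoc)
  qed
  ultimately show ?thesis using esub_iff[where g=g, OF assms(1)] by blast
qed



lemma sum_ninf: "(\<And>i. i \<in> A \<Longrightarrow> h i \<noteq> -\<infinity>) \<Longrightarrow> sum h A \<noteq> (-\<infinity>::ereal)"
  by (induction A rule: infinite_finite_induct) auto

locale setting =
  fixes L :: "('a \<Rightarrow> real) set" and f :: "nat \<Rightarrow> 'a \<Rightarrow> ereal" and m :: nat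
  assumes L_add: "\<And>l1 l2. l1 \<in> L \<Longrightarrow> l2 \<in> L \<Longrightarrow> (\<lambda>x. l1 x + l2 x) \<in> L"
    and m1: "m \<ge> 1"
    and f_ninf: "\<And>i x. i \<in> {1..m} \<Longrightarrow> f i x \<noteq> -\<infinity>"
begin

lemma fsum_ninf: "fsum m f y \<noteq> -\<infinity>"
  unfolding fsum_def by (rule sum_ninf) (use f_ninf in auto)

lemma fsum_ninf': "\<And>y. fsum m f y \<noteq> -\<infinity>" by (rule fsum_ninf)

lemma cdom_iff: "y \<in> cdom m f \<longleftrightarrow> fsum m f y \<noteq> \<infinity>"
  unfolding cdom_def fsum_def edom_def using sum_Pinfty[of "\<lambda>i. f i y" "{1..m}"]
  by (auto simp: less_top[symmetric])

lemma f_real: "y \<in> cdom m f \<Longrightarrow> i \<in> {1..m} \<Longrightarrow> f i y = ereal (real_of_ereal (f i y))"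
  unfolding cdom_def edom_def using f_ninf[of i y] by (cases "f i y") auto

lemma fsum_real: "y \<in> cdom m f \<Longrightarrow> fsum m f y = ereal (\<Sum>i\<in>{1..m}. real_of_ereal (f i y))"
  unfolding fsum_def sum_ereal[symmetric] by (rule sum.cong) (auto intro: f_real)

lemma L_sum: "(\<forall>i\<in>{1..m}. v i \<in> L) \<Longrightarrow> (\<Sum>i\<in>{1..m}. v i) \<in> L"
  by (rule sum_in_L[OF L_add]) (use m1 in auto)

lemma conj_le:
  "fconj (fsum m f) (\<Sum>i\<in>{1..m}. v i) \<le> (\<Sum>i\<in>{1..m}. fconj (f i) (v i))"
  unfolding fconj_def
proof (rule SUP_least)
  fix y
  show "ereal ((\<Sum>i\<in>{1..m}. v i) y) - fsum m f y \<le> (\<Sum>i\<in>{1..m}. SUP x. ereal (v i x) - f i x)"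
  proof (cases "y \<in> cdom m f")
    case True
    have "ereal ((\<Sum>i\<in>{1..m}. v i) y) - fsum m f y = (\<Sum>i\<in>{1..m}. ereal (v i y) - f i y)"
    proof -
      have "(\<Sum>i\<in>{1..m}. ereal (v i y) - f i y) = (\<Sum>i\<in>{1..m}. ereal (v i y - real_of_ereal (f i y)))"
        by (rule sum.cong) (use f_real[OF True] in \<open>auto simp: ereal_minus(1)[symmetric]\<close>)
      then show ?thesis using fsum_real[OF True] 
        by (simp add: sum_fun_apply sum_subtractf)
    qed
    also have "\<dots> \<le> (\<Sum>i\<in>{1..m}. SUP x. ereal (v i x) - f i x)"
      by (intro sum_mono SUP_upper) auto
    finally show ?thesis .
  next
    case False
    then show ?thesis using cdom_iff by simp
  qed
qed

lemma fi_ninf: "i \<in> {1..m} \<Longrightarrow> \<forall>y. f i y \<noteq> -\<infinity>" using f_ninf by auto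

lemma esub_fi: "i \<in> {1..m} \<Longrightarrow> l \<in> esubdiff L (f i) e x \<longleftrightarrow> l \<in> L \<and> f i x \<noteq> \<infinity> \<and> fconj (f i) l \<le> ereal (l x) - f i x + ereal e"
  by (rule esub_iff) (use f_ninf in auto)

lemma esub_F: "l \<in> esubdiff L (fsum m f) e x \<longleftrightarrow> l \<in> L \<and> x \<in> cdom m f \<and> fconj (fsum m f) l \<le> ereal (l x) - fsum m f x + ereal e"
  using esub_iff[where g="fsum m f", OF fsum_ninf'] cdom_iff by blast

lemma esub_cdom: "\<forall>i\<in>{1..m}. v i \<in> esubdiff L (f i) (e i) x \<Longrightarrow> x \<in> cdom m f"
  unfolding cdom_def edom_def using esub_fi by (auto simp: less_top[symmetric])

lemma sumconj_bound:
  assumes v: "\<forall>i\<in>{1..m}. v i \<in> esubdiff L (f i) (e i) x"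
  shows "(\<Sum>i\<in>{1..m}. fconj (f i) (v i)) \<le> ereal ((\<Sum>i\<in>{1..m}. v i) x) - fsum m f x + ereal (\<Sum>i\<in>{1..m}. e i)"
proof -
  have x: "x \<in> cdom m f" by (rule esub_cdom[OF v])
  have "(\<Sum>i\<in>{1..m}. fconj (f i) (v i)) \<le> (\<Sum>i\<in>{1..m}. ereal (v i x - real_of_ereal (f i x) + e i))"
  proof (rule sum_mono)
    fix i assume i: "i \<in> {1..m}"
    then have "fconj (f i) (v i) \<le> ereal (v i x) - f i x + ereal (e i)" using v esub_fi by blast
    also have "\<dots> = ereal (v i x - real_of_ereal (f i x) + e i)"
      by (subst f_real[OF x i]) simp
    finally show "fconj (f i) (v i) \<le> ereal (v i x - real_of_ereal (f i x) + e i)" .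
  qed
  also have "\<dots> = ereal ((\<Sum>i\<in>{1..m}. v i) x) - fsum m f x + ereal (\<Sum>i\<in>{1..m}. e i)"
    by (simp add: fsum_real[OF x] sum_fun_apply sum.distrib sum_subtractf)
  finally show ?thesis .
qed

lemma sub_sum:
  assumes v: "\<forall>i\<in>{1..m}. v i \<in> esubdiff L (f i) (e i) x"
  shows "(\<Sum>i\<in>{1..m}. v i) \<in> esubdiff L (fsum m f) (\<Sum>i\<in>{1..m}. e i) x"
proof -
  have x: "x \<in> cdom m f" by (rule esub_cdom[OF v])
  have "\<forall>i\<in>{1..m}. v i \<in> L" using v esub_fi by blast
  then have "(\<Sum>i\<in>{1..m}. v i) \<in> L" by (rule L_sum)
  moreover have "fconj (fsum m f) (\<Sum>i\<in>{1..m}. v i) \<le> ereal ((\<Sum>i\<in>{1..m}. v i) x) - fsum m f x + ereal (\<Sum>i\<in>{1..m}. e i)"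
    using conj_le sumconj_bound[OF v] by (rule order_trans)
  ultimately show ?thesis using x esub_F by blast
qed

lemma conj_le_infconv: "fconj (fsum m f) l \<le> infconv L m (\<lambda>i. fconj (f i)) l"
  unfolding infconv_def by (rule INF_greatest) (use conj_le in auto)

lemma decompose:
  assumes x: "x \<in> cdom m f"
    and lt: "infconv L m (\<lambda>i. fconj (f i)) l < ereal (l x) - fsum m f x + ereal c"
  shows "\<exists>v e. (\<forall>i\<in>{1..m}. e i \<ge> 0 \<and> v i \<in> esubdiff L (f i) (e i) x) \<and> (\<Sum>i\<in>{1..m}. v i) = l \<and> (\<Sum>i\<in>{1..m}. e i) = c"
proof -
  define a where "a i = real_of_ereal (f i x)" for i
  have fa: "f i x = ereal (a i)" if "i \<in> {1..m}" for i using f_real[OF x that] a_def by simp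
  obtain v where vL: "\<forall>i\<in>{1..m}. v i \<in> L" and vs: "(\<Sum>i\<in>{1..m}. v i) = l"
    and vlt: "(\<Sum>i\<in>{1..m}. fconj (f i) (v i)) < ereal (l x) - fsum m f x + ereal c"
    using lt unfolding infconv_def INF_less_iff by blast
  have lb: "ereal (v i x - a i) \<le> fconj (f i) (v i)" if "i \<in> {1..m}" for i
  proof -
    have "ereal (v i x) - f i x \<le> fconj (f i) (v i)" unfolding fconj_def by (rule SUP_upper) simp
    then show ?thesis using fa[OF that] by simp
  qed
  have notinf: "(\<Sum>i\<in>{1..m}. fconj (f i) (v i)) \<noteq> \<infinity>" using vlt by auto
  define r where "r i = real_of_ereal (fconj (f i) (v i))" for i
  have fr: "fconj (f i) (v i) = ereal (r i)" if "i \<in> {1..m}" for i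
  proof -
    have "fconj (f i) (v i) \<noteq> \<infinity>" using notinf sum_Pinfty[of "\<lambda>i. fconj (f i) (v i)" "{1..m}"] that by auto
    moreover have "fconj (f i) (v i) \<noteq> -\<infinity>" using lb[OF that] by auto
    ultimately show ?thesis unfolding r_def by (cases "fconj (f i) (v i)") auto
  qed
  have rlb: "v i x - a i \<le> r i" if "i \<in> {1..m}" for i using lb[OF that] fr[OF that] by simp
  have "(\<Sum>i\<in>{1..m}. fconj (f i) (v i)) = ereal (\<Sum>i\<in>{1..m}. r i)"
    unfolding sum_ereal[symmetric] by (rule sum.cong) (use fr in auto)
  moreover have "fsum m f x = ereal (\<Sum>i\<in>{1..m}. a i)" using fsum_real[OF x] a_def by simp
  ultimately have rs: "(\<Sum>i\<in>{1..m}. r i) < l x - (\<Sum>i\<in>{1..m}. a i) + c" using vlt by simp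
  define e0 where "e0 i = r i - v i x + a i" for i
  define d where "d = c - (\<Sum>i\<in>{1..m}. e0 i)"
  define e where "e i = e0 i + (if i = 1 then d else 0)" for i
  have lx: "l x = (\<Sum>i\<in>{1..m}. v i x)" using vs sum_fun_apply by metis
  have d0: "d \<ge> 0" using rs unfolding d_def e0_def by (simp add: sum.distrib sum_subtractf lx)
  have "1 \<in> {1..m}" using m1 by simp
  then have es: "(\<Sum>i\<in>{1..m}. e i) = c" unfolding e_def d_def by (simp add: sum.distrib)
  have "\<forall>i\<in>{1..m}. e i \<ge> 0 \<and> v i \<in> esubdiff L (f i) (e i) x"
  proof
    fix i assume i: "i \<in> {1..m}"
    have "e i \<ge> e0 i" using d0 by (simp add: e_def)
    moreover have "e0 i \<ge> 0" using rlb[OF i] by (simp add: e0_def)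
    moreover have "fconj (f i) (v i) \<le> ereal (v i x) - f i x + ereal (e i)"
      using fr[OF i] fa[OF i] \<open>e i \<ge> e0 i\<close> by (simp add: e0_def)
    ultimately show "e i \<ge> 0 \<and> v i \<in> esubdiff L (f i) (e i) x"
      using esub_fi[OF i] vL i fa[OF i] by auto
  qed
  then show ?thesis using vs es by blast
qed

end


lemma cont_eval: "continuous_on UNIV (\<lambda>l::'a\<Rightarrow>real. l y)"
  by simp

lemma closed_le_eval: "closed {l::'a\<Rightarrow>real. l y \<le> c}"
  by (rule closed_Collect_le) (auto intro: continuous_on_const)

lemma closed_le_eval2: "closed {l::'a\<Rightarrow>real. l y - l x \<le> c}"
  by (rule closed_Collect_le) (auto intro!: continuous_intros)

lemma open_gt_eval: "open {l::'a\<Rightarrow>real. c < l y}"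
  by (rule open_Collect_less) (auto intro: continuous_on_const)

lemma open_lt_eval: "open {l::'a\<Rightarrow>real. l y < c}"
  by (rule open_Collect_less) (auto intro: continuous_on_const)

lemma msum_mono: "(\<And>i. i \<in> {1..m} \<Longrightarrow> A i \<subseteq> B i) \<Longrightarrow> msum m A \<subseteq> msum m B"
  unfolding msum_def by blast

context setting begin

lemma esub_fi_mono: "\<forall>i\<in>{1..m}. e i \<le> e' \<Longrightarrow> msum m (\<lambda>i. esubdiff L (f i) (e i) x) \<subseteq> msum m (\<lambda>i. esubdiff L (f i) e' x)"
  by (rule msum_mono, rule esub_mono) (use f_ninf in auto)

lemma e_le_sum: "\<forall>i\<in>{1..m}. e i \<ge> (0::real) \<Longrightarrow> i \<in> {1..m} \<Longrightarrow> e i \<le> (\<Sum>i\<in>{1..m}. e i)"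
  by (rule member_le_sum) auto

lemma closed_sub:
  "\<exists>C. closed C \<and> esubdiff L (fsum m f) \<delta> x = L \<inter> C"
proof (cases "x \<in> cdom m f")
  case False
  then show ?thesis using esub_F by (intro exI[of _ "{}"]) auto
next
  case True
  define A where "A = (\<Sum>i\<in>{1..m}. real_of_ereal (f i x))"
  have fx: "fsum m f x = ereal A" using fsum_real[OF True] A_def by simp
  define C where "C = {l. \<forall>y. ereal (l y) - fsum m f y \<le> ereal (l x) - fsum m f x + ereal \<delta>}"
  have "closed C" unfolding C_def
  proof (rule closed_Collect_all)
    fix y
    show "closed {l. ereal (l y) - fsum m f y \<le> ereal (l x) - fsum m f x + ereal \<delta>}"
    proof (cases "fsum m f y")
      case (real b)
      have "{l. ereal (l y) - fsum m f y \<le> ereal (l x) - fsum m f x + ereal \<delta>} = {l. l y - l x \<le> b - A + \<delta>}"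
        using real fx by auto
      then show ?thesis using closed_le_eval2 by metis
    next
      case PInf then show ?thesis using fx by simp
    next
      case MInf then show ?thesis using fsum_ninf by simp
    qed
  qed
  moreover have "esubdiff L (fsum m f) \<delta> x = L \<inter> C"
    unfolding C_def using esub_F True by (auto simp: fconj_def SUP_le_iff)
  ultimately show ?thesis by blast
qed

end


context setting begin

lemma p14:
  assumes dom_ne: "cdom m f \<noteq> {}"
    and P1: "\<exists>K>1. \<forall>x\<in>cdom m f. \<forall>\<epsilon>>0.
              esubdiff L (fsum m f) \<epsilon> x \<subseteq> msum m (\<lambda>i. esubdiff L (f i) (K * \<epsilon>) x)"
  shows "\<forall>l\<in>L. fconj (fsum m f) l = infconv L m (\<lambda>i. fconj (f i)) l"
proof
  fix l assume lL: "l \<in> L"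
  obtain K where K1: "K > 1" and KP: "\<forall>x\<in>cdom m f. \<forall>\<epsilon>>0.
              esubdiff L (fsum m f) \<epsilon> x \<subseteq> msum m (\<lambda>i. esubdiff L (f i) (K * \<epsilon>) x)"
    using P1 by blast
  obtain x0 where x0: "x0 \<in> cdom m f" using dom_ne by blast
  have "ereal (l x0) - fsum m f x0 \<le> fconj (fsum m f) l" unfolding fconj_def by (rule SUP_upper) simp
  then have nm: "fconj (fsum m f) l \<noteq> -\<infinity>" using fsum_real[OF x0] by auto
  have "infconv L m (\<lambda>i. fconj (f i)) l \<le> fconj (fsum m f) l"
  proof (cases "fconj (fsum m f) l")
    case PInf then show ?thesis by simp
  next
    case MInf then show ?thesis using nm by simp
  next
    case (real s)
    show ?thesis
    proof (rule ereal_le_epsilon2)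
      fix \<delta> :: real assume \<delta>: "\<delta> > 0"
      define \<epsilon> where "\<epsilon> = \<delta> / (real m * K + 1)"
      have mK: "real m * K + 1 > 0" by (intro add_nonneg_pos mult_nonneg_nonneg) (use K1 in auto)
      have \<epsilon>0: "\<epsilon> > 0" unfolding \<epsilon>_def using \<delta> mK by simp
      have \<epsilon>\<delta>: "\<epsilon> + real m * (K * \<epsilon>) = \<delta>"
      proof -
        have "\<epsilon> * (real m * K + 1) = \<delta>" unfolding \<epsilon>_def using mK by simp
        then show ?thesis by (simp add: algebra_simps)
      qed
      have "ereal (s - \<epsilon>) < fconj (fsum m f) l" using real \<epsilon>0 by simp
      then obtain y where y: "ereal (s - \<epsilon>) < ereal (l y) - fsum m f y"
        unfolding fconj_def less_SUP_iff by blast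
      then have ycd: "y \<in> cdom m f" using cdom_iff by (cases "fsum m f y") auto
      define A where "A = (\<Sum>i\<in>{1..m}. real_of_ereal (f i y))"
      have fy: "fsum m f y = ereal A" using fsum_real[OF ycd] A_def by simp
      have sA: "s - \<epsilon> < l y - A" using y fy by simp
      have "l \<in> esubdiff L (fsum m f) \<epsilon> y"
        using esub_F lL ycd real fy sA by simp
      then have "l \<in> msum m (\<lambda>i. esubdiff L (f i) (K * \<epsilon>) y)" using KP ycd \<epsilon>0 by blast
      then obtain v where v: "\<forall>i\<in>{1..m}. v i \<in> esubdiff L (f i) (K * \<epsilon>) y" and lv: "l = (\<Sum>i\<in>{1..m}. v i)"
        unfolding msum_def by blast
      have vL: "\<forall>i\<in>{1..m}. v i \<in> L" using v esub_fi by blast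
      have "infconv L m (\<lambda>i. fconj (f i)) l \<le> (\<Sum>i\<in>{1..m}. fconj (f i) (v i))"
        unfolding infconv_def by (rule INF_lower) (use vL lv in auto)
      also have "\<dots> \<le> ereal ((\<Sum>i\<in>{1..m}. v i) y) - fsum m f y + ereal (\<Sum>i\<in>{1..m}. K * \<epsilon>)"
        by (rule sumconj_bound[OF v])
      also have "\<dots> = ereal (l y - A + real m * (K * \<epsilon>))" using lv fy by simp
      also have "\<dots> \<le> fconj (fsum m f) l + ereal \<delta>"
      proof -
        have "ereal (l y) - fsum m f y \<le> fconj (fsum m f) l" unfolding fconj_def by (rule SUP_upper) simp
        then have "l y - A \<le> s" using real fy by simp
        then have "l y - A + real m * (K * \<epsilon>) \<le> s + \<delta>" using \<epsilon>\<delta> \<epsilon>0 by linarith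
        then show ?thesis using real by simp
      qed
      finally show "infconv L m (\<lambda>i. fconj (f i)) l \<le> fconj (fsum m f) l + ereal \<delta>" .
    qed
  qed
  then show "fconj (fsum m f) l = infconv L m (\<lambda>i. fconj (f i)) l"
    using conj_le_infconv by (rule antisym[rotated])
qed

lemma p43:
  assumes P4: "\<forall>l\<in>L. fconj (fsum m f) l = infconv L m (\<lambda>i. fconj (f i)) l"
  shows "\<forall>x. \<forall>\<epsilon>\<ge>0. esubdiff L (fsum m f) \<epsilon> x =
              (\<Inter>\<eta>\<in>{0<..}. \<Union>{msum m (\<lambda>i. esubdiff L (f i) (e i) x) | e.
                  (\<forall>i\<in>{1..m}. e i \<ge> 0) \<and> (\<Sum>i\<in>{1..m}. e i) = \<epsilon> + \<eta>})"
proof (intro allI impI equalityI subsetI)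
  fix x and \<epsilon> :: real and l
  assume \<epsilon>: "\<epsilon> \<ge> 0" and l: "l \<in> esubdiff L (fsum m f) \<epsilon> x"
  then have lL: "l \<in> L" and x: "x \<in> cdom m f"
    and le: "fconj (fsum m f) l \<le> ereal (l x) - fsum m f x + ereal \<epsilon>" using esub_F by auto
  show "l \<in> (\<Inter>\<eta>\<in>{0<..}. \<Union>{msum m (\<lambda>i. esubdiff L (f i) (e i) x) | e.
                  (\<forall>i\<in>{1..m}. e i \<ge> 0) \<and> (\<Sum>i\<in>{1..m}. e i) = \<epsilon> + \<eta>})"
  proof
    fix \<eta> :: real assume "\<eta> \<in> {0<..}"
    then have \<eta>: "\<eta> > 0" by simp
    have "infconv L m (\<lambda>i. fconj (f i)) l < ereal (l x) - fsum m f x + ereal (\<epsilon> + \<eta>)"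
      proof -
      obtain A where fx: "fsum m f x = ereal A" using fsum_real[OF x] by blast
      have "infconv L m (\<lambda>i. fconj (f i)) l = fconj (fsum m f) l" using P4 lL by simp
      also have "\<dots> \<le> ereal (l x - A + \<epsilon>)" using le fx by simp
      also have "\<dots> < ereal (l x - A + (\<epsilon> + \<eta>))" using \<eta> by simp
      finally show ?thesis using fx by simp
    qed
    then obtain v e where ve: "\<forall>i\<in>{1..m}. e i \<ge> 0 \<and> v i \<in> esubdiff L (f i) (e i) x"
      and vs: "(\<Sum>i\<in>{1..m}. v i) = l" and es: "(\<Sum>i\<in>{1..m}. e i) = \<epsilon> + \<eta>"
      using decompose[OF x] by blast
    have "l \<in> msum m (\<lambda>i. esubdiff L (f i) (e i) x)" unfolding msum_def using ve vs by auto
    then show "l \<in> \<Union>{msum m (\<lambda>i. esubdiff L (f i) (e i) x) | e.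
                  (\<forall>i\<in>{1..m}. e i \<ge> 0) \<and> (\<Sum>i\<in>{1..m}. e i) = \<epsilon> + \<eta>}" using ve es by blast
  qed
next
  fix x and \<epsilon> :: real and l
  assume l: "l \<in> (\<Inter>\<eta>\<in>{0<..}. \<Union>{msum m (\<lambda>i. esubdiff L (f i) (e i) x) | e.
                  (\<forall>i\<in>{1..m}. e i \<ge> 0) \<and> (\<Sum>i\<in>{1..m}. e i) = \<epsilon> + \<eta>})"
  show "l \<in> esubdiff L (fsum m f) \<epsilon> x"
  proof (rule esub_eps[where g="fsum m f"])
    show "\<And>y. fsum m f y \<noteq> -\<infinity>" by (rule fsum_ninf)
    fix \<eta> :: real assume \<eta>: "\<eta> > 0"
    then obtain e where e: "(\<forall>i\<in>{1..m}. e i \<ge> 0) \<and> (\<Sum>i\<in>{1..m}. e i) = \<epsilon> + \<eta>"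
      and le: "l \<in> msum m (\<lambda>i. esubdiff L (f i) (e i) x)" using l by auto
    then obtain v where v: "\<forall>i\<in>{1..m}. v i \<in> esubdiff L (f i) (e i) x" and lv: "l = (\<Sum>i\<in>{1..m}. v i)"
      unfolding msum_def by blast
    show "l \<in> esubdiff L (fsum m f) (\<epsilon> + \<eta>) x" using sub_sum[OF v] lv e by simp
  qed
qed

lemma p31:
  assumes P3: "\<forall>x. \<forall>\<epsilon>\<ge>0. esubdiff L (fsum m f) \<epsilon> x =
              (\<Inter>\<eta>\<in>{0<..}. \<Union>{msum m (\<lambda>i. esubdiff L (f i) (e i) x) | e.
                  (\<forall>i\<in>{1..m}. e i \<ge> 0) \<and> (\<Sum>i\<in>{1..m}. e i) = \<epsilon> + \<eta>})"
  shows "\<exists>K>1. \<forall>x\<in>cdom m f. \<forall>\<epsilon>>0.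
              esubdiff L (fsum m f) \<epsilon> x \<subseteq> msum m (\<lambda>i. esubdiff L (f i) (K * \<epsilon>) x)"
proof (intro exI[of _ 2] conjI ballI allI impI subsetI)
  fix x \<epsilon> l assume \<epsilon>: "(\<epsilon>::real) > 0" and l: "l \<in> esubdiff L (fsum m f) \<epsilon> x"
  then obtain e where e: "(\<forall>i\<in>{1..m}. e i \<ge> 0) \<and> (\<Sum>i\<in>{1..m}. e i) = \<epsilon> + \<epsilon>"
      and le: "l \<in> msum m (\<lambda>i. esubdiff L (f i) (e i) x)" proof -
    have "l \<in> (\<Inter>\<eta>\<in>{0<..}. \<Union>{msum m (\<lambda>i. esubdiff L (f i) (e i) x) | e.
                  (\<forall>i\<in>{1..m}. e i \<ge> 0) \<and> (\<Sum>i\<in>{1..m}. e i) = \<epsilon> + \<eta>})"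
      using P3[rule_format, of \<epsilon> x] \<epsilon> l by simp
    moreover have "\<epsilon> \<in> {0<..}" using \<epsilon> by simp
    ultimately have "l \<in> \<Union>{msum m (\<lambda>i. esubdiff L (f i) (e i) x) | e.
                  (\<forall>i\<in>{1..m}. e i \<ge> 0) \<and> (\<Sum>i\<in>{1..m}. e i) = \<epsilon> + \<epsilon>}"
      by (rule INT_D)
    then show ?thesis using that by blast
  qed
  have "\<forall>i\<in>{1..m}. e i \<le> 2 * \<epsilon>" using e e_le_sum[of e] by auto
  then show "l \<in> msum m (\<lambda>i. esubdiff L (f i) (2 * \<epsilon>) x)" using esub_fi_mono le by blast
qed simp

lemma p45:
  assumes P4: "\<forall>l\<in>L. fconj (fsum m f) l = infconv L m (\<lambda>i. fconj (f i)) l"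
  shows "lsc_on L (infconv L m (\<lambda>i. fconj (f i)))"
  unfolding lsc_on_def
proof
  fix r :: real
  define C where "C = {l. \<forall>y. ereal (l y) - fsum m f y \<le> ereal r}"
  have "closed C" unfolding C_def
  proof (rule closed_Collect_all)
    fix y
    show "closed {l. ereal (l y) - fsum m f y \<le> ereal r}"
    proof (cases "fsum m f y")
      case (real b)
      have "{l. ereal (l y) - fsum m f y \<le> ereal r} = {l. l y \<le> r + b}"
        using real by auto
      then show ?thesis using closed_le_eval by metis
    next
      case PInf then show ?thesis by simp
    next
      case MInf then show ?thesis using fsum_ninf by simp
    qed
  qed
  have eq: "infconv L m (\<lambda>i. fconj (f i)) l \<le> ereal r \<longleftrightarrow> l \<in> C" if "l \<in> L" for l
  proof -
    have "fconj (fsum m f) l \<le> ereal r \<longleftrightarrow> l \<in> C" unfolding C_def fconj_def by (simp add: SUP_le_iff)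
    then show ?thesis using P4 that by simp
  qed
  moreover have "{l \<in> L. infconv L m (\<lambda>i. fconj (f i)) l \<le> ereal r} = L \<inter> C"
    using eq by auto
  ultimately show "closedin (top_of_set L) {l \<in> L. infconv L m (\<lambda>i. fconj (f i)) l \<le> ereal r}"
    using \<open>closed C\<close> by (simp add: closedin_closed_Int)
qed

end


context setting begin

lemma p52:
  assumes P5: "lsc_on L (infconv L m (\<lambda>i. fconj (f i)))"
  shows "\<exists>K>0. \<forall>x\<in>cdom m f. \<forall>\<epsilon>>0.
              L \<inter> closure (msum m (\<lambda>i. esubdiff L (f i) \<epsilon> x))
                \<subseteq> msum m (\<lambda>i. esubdiff L (f i) (K * \<epsilon>) x)"
proof (intro exI[of _ "real m + 1"] conjI ballI allI impI subsetI)
  fix x \<epsilon> l assume x: "x \<in> cdom m f" and \<epsilon>: "(\<epsilon>::real) > 0"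
    and l: "l \<in> L \<inter> closure (msum m (\<lambda>i. esubdiff L (f i) \<epsilon> x))"
  define S where "S = msum m (\<lambda>i. esubdiff L (f i) \<epsilon> x)"
  obtain A where fx: "fsum m f x = ereal A" using fsum_real[OF x] by blast
  define c0 where "c0 = l x - A + real m * \<epsilon>"
  have bound: "infconv L m (\<lambda>i. fconj (f i)) l' \<le> ereal (l' x - A + real m * \<epsilon>) \<and> l' \<in> L" if "l' \<in> S" for l'
  proof -
    obtain v where v: "\<forall>i\<in>{1..m}. v i \<in> esubdiff L (f i) \<epsilon> x" and lv: "l' = (\<Sum>i\<in>{1..m}. v i)"
      using \<open>l' \<in> S\<close> unfolding S_def msum_def by blast
    have vL: "\<forall>i\<in>{1..m}. v i \<in> L" using v esub_fi by blast
    have "infconv L m (\<lambda>i. fconj (f i)) l' \<le> (\<Sum>i\<in>{1..m}. fconj (f i) (v i))"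
      unfolding infconv_def by (rule INF_lower) (use vL lv in auto)
    also have "\<dots> \<le> ereal ((\<Sum>i\<in>{1..m}. v i) x) - fsum m f x + ereal (\<Sum>i\<in>{1..m}. \<epsilon>)"
      using sumconj_bound[of v "\<lambda>_. \<epsilon>"] v by simp
    also have "\<dots> = ereal (l' x - A + real m * \<epsilon>)" using lv fx by simp
    finally show ?thesis using L_sum[OF vL] lv by simp
  qed
  have claim: "infconv L m (\<lambda>i. fconj (f i)) l \<le> ereal c0"
  proof (rule ccontr)
    assume "\<not> ?thesis"
    then have "ereal c0 < infconv L m (\<lambda>i. fconj (f i)) l" by simp
    then obtain r where r1: "ereal c0 < ereal r" and r2: "ereal r < infconv L m (\<lambda>i. fconj (f i)) l"
      using ereal_dense2 by blast
    define \<delta> where "\<delta> = (r - c0) / 2"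
    have \<delta>: "\<delta> > 0" using r1 unfolding \<delta>_def by simp
    define B where "B = {l' \<in> L. infconv L m (\<lambda>i. fconj (f i)) l' \<le> ereal (c0 + \<delta>)}"
    have "closedin (top_of_set L) B" using P5 unfolding lsc_on_def B_def by blast
    then obtain C where C: "closed C" and BC: "B = L \<inter> C" using closedin_closed by metis
    have "c0 + \<delta> < r" using r1 unfolding \<delta>_def by (simp add: field_simps)
    then have "ereal (c0 + \<delta>) < ereal r" by simp
    then have "ereal (c0 + \<delta>) < infconv L m (\<lambda>i. fconj (f i)) l" using r2 by (rule less_trans)
    then have "l \<notin> B" unfolding B_def by auto
    then have lC: "l \<notin> C" using l BC by blast
    define T where "T = - C \<inter> {l'. l' x < l x + \<delta>}"
    have oT: "open T" unfolding T_def using C open_lt_eval by (intro open_Int) auto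
    have lT: "l \<in> T" unfolding T_def using lC \<delta> by simp
    have "l \<in> closure S" using l S_def by simp
    then have "S \<inter> T \<noteq> {}" using oT lT unfolding closure_iff_nhds_not_empty by blast
    then obtain l' where l'S: "l' \<in> S" and l'T: "l' \<in> T" by blast
    have "infconv L m (\<lambda>i. fconj (f i)) l' \<le> ereal (l' x - A + real m * \<epsilon>)" and l'L: "l' \<in> L"
      using bound[OF l'S] by auto
    moreover have "l' x - A + real m * \<epsilon> \<le> c0 + \<delta>" using l'T unfolding T_def c0_def by simp
    ultimately have "l' \<in> B" unfolding B_def by (auto intro: order_trans)
    then show False using l'T BC unfolding T_def by blast
  qed
  have "infconv L m (\<lambda>i. fconj (f i)) l < ereal (l x) - fsum m f x + ereal ((real m + 1) * \<epsilon>)"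
  proof -
    have "ereal c0 < ereal (l x - A + (real m + 1) * \<epsilon>)" unfolding c0_def using \<epsilon> by (simp add: algebra_simps)
    then have "infconv L m (\<lambda>i. fconj (f i)) l < ereal (l x - A + (real m + 1) * \<epsilon>)"
      using claim by (rule le_less_trans[rotated])
    then show ?thesis using fx by simp
  qed
  then obtain v e where ve: "\<forall>i\<in>{1..m}. e i \<ge> 0 \<and> v i \<in> esubdiff L (f i) (e i) x"
      and vs: "(\<Sum>i\<in>{1..m}. v i) = l" and es: "(\<Sum>i\<in>{1..m}. e i) = (real m + 1) * \<epsilon>"
    using decompose[OF x] by blast
  have "l \<in> msum m (\<lambda>i. esubdiff L (f i) (e i) x)" unfolding msum_def using ve vs by auto
  moreover have "\<forall>i\<in>{1..m}. e i \<le> (real m + 1) * \<epsilon>" using ve es e_le_sum[of e] by auto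
  ultimately show "l \<in> msum m (\<lambda>i. esubdiff L (f i) ((real m + 1) * \<epsilon>) x)" using esub_fi_mono by blast
qed simp

end


context setting begin

lemma pH:
  assumes H: "\<forall>x\<in>cdom m f. \<forall>\<epsilon>\<ge>0. esubdiff L (fsum m f) \<epsilon> x =
              (\<Inter>\<eta>\<in>{0<..}. L \<inter> closure (\<Union>{msum m (\<lambda>i. esubdiff L (f i) (e i) x) | e.
                  (\<forall>i\<in>{1..m}. e i \<ge> 0) \<and> (\<Sum>i\<in>{1..m}. e i) = \<epsilon> + \<eta>}))"
    and P2: "\<exists>K>0. \<forall>x\<in>cdom m f. \<forall>\<epsilon>>0.
              L \<inter> closure (msum m (\<lambda>i. esubdiff L (f i) \<epsilon> x))
                \<subseteq> msum m (\<lambda>i. esubdiff L (f i) (K * \<epsilon>) x)"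
  shows "\<exists>K>1. \<forall>x\<in>cdom m f. \<forall>\<epsilon>>0.
              esubdiff L (fsum m f) \<epsilon> x \<subseteq> msum m (\<lambda>i. esubdiff L (f i) (K * \<epsilon>) x)"
proof -
  obtain K where K: "K > 0" and KP: "\<forall>x\<in>cdom m f. \<forall>\<epsilon>>0.
              L \<inter> closure (msum m (\<lambda>i. esubdiff L (f i) \<epsilon> x))
                \<subseteq> msum m (\<lambda>i. esubdiff L (f i) (K * \<epsilon>) x)" using P2 by blast
  show ?thesis
  proof (intro exI[of _ "2 * K + 2"] conjI ballI allI impI subsetI)
    show "2 * K + 2 > 1" using K by simp
    fix x \<epsilon> l assume x: "x \<in> cdom m f" and \<epsilon>: "(\<epsilon>::real) > 0"
      and l: "l \<in> esubdiff L (fsum m f) \<epsilon> x"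
    have "l \<in> (\<Inter>\<eta>\<in>{0<..}. L \<inter> closure (\<Union>{msum m (\<lambda>i. esubdiff L (f i) (e i) x) | e.
                  (\<forall>i\<in>{1..m}. e i \<ge> 0) \<and> (\<Sum>i\<in>{1..m}. e i) = \<epsilon> + \<eta>}))"
      using H x \<epsilon> l by auto
    moreover have "\<epsilon> \<in> {0<..}" using \<epsilon> by simp
    ultimately have l1: "l \<in> L \<inter> closure (\<Union>{msum m (\<lambda>i. esubdiff L (f i) (e i) x) | e.
                  (\<forall>i\<in>{1..m}. e i \<ge> 0) \<and> (\<Sum>i\<in>{1..m}. e i) = \<epsilon> + \<epsilon>})"
      by (rule INT_D)
    have sub: "\<Union>{msum m (\<lambda>i. esubdiff L (f i) (e i) x) | e.
                  (\<forall>i\<in>{1..m}. e i \<ge> 0) \<and> (\<Sum>i\<in>{1..m}. e i) = \<epsilon> + \<epsilon>}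
           \<subseteq> msum m (\<lambda>i. esubdiff L (f i) (2 * \<epsilon>) x)"
    proof (rule Union_least)
      fix X assume "X \<in> {msum m (\<lambda>i. esubdiff L (f i) (e i) x) | e.
                  (\<forall>i\<in>{1..m}. e i \<ge> 0) \<and> (\<Sum>i\<in>{1..m}. e i) = \<epsilon> + \<epsilon>}"
      then obtain e where e: "\<forall>i\<in>{1..m}. e i \<ge> 0" "(\<Sum>i\<in>{1..m}. e i) = \<epsilon> + \<epsilon>"
        and X: "X = msum m (\<lambda>i. esubdiff L (f i) (e i) x)" by blast
      have "\<forall>i\<in>{1..m}. e i \<le> 2 * \<epsilon>" using e e_le_sum[of e] by auto
      then show "X \<subseteq> msum m (\<lambda>i. esubdiff L (f i) (2 * \<epsilon>) x)" using X esub_fi_mono by blast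
    qed
    have "l \<in> L \<inter> closure (msum m (\<lambda>i. esubdiff L (f i) (2 * \<epsilon>) x))"
      using l1 closure_mono[OF sub] by blast
    moreover have "2 * \<epsilon> > 0" using \<epsilon> by simp
    ultimately have "l \<in> msum m (\<lambda>i. esubdiff L (f i) (K * (2 * \<epsilon>)) x)" using KP x by blast
    moreover have "\<forall>i\<in>{1..m}. K * (2 * \<epsilon>) \<le> (2 * K + 2) * \<epsilon>" using \<epsilon> by (simp add: algebra_simps)
    ultimately show "l \<in> msum m (\<lambda>i. esubdiff L (f i) ((2 * K + 2) * \<epsilon>) x)"
      using esub_fi_mono[of "\<lambda>_. K * (2 * \<epsilon>)"] by blast
  qed
qed

lemma pE:
  assumes cl: "(L \<times> UNIV) \<inter> closure (msum m (\<lambda>i. epi L (fconj (f i)))) = epi L (fconj (fsum m f))"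
  shows "\<forall>x\<in>cdom m f. \<forall>\<epsilon>\<ge>0. esubdiff L (fsum m f) \<epsilon> x =
              (\<Inter>\<eta>\<in>{0<..}. L \<inter> closure (\<Union>{msum m (\<lambda>i. esubdiff L (f i) (e i) x) | e.
                  (\<forall>i\<in>{1..m}. e i \<ge> 0) \<and> (\<Sum>i\<in>{1..m}. e i) = \<epsilon> + \<eta>}))"
proof (intro ballI allI impI equalityI subsetI)
  fix x and \<epsilon> :: real and l
  assume x: "x \<in> cdom m f" and \<epsilon>: "\<epsilon> \<ge> 0"
  define U where "U \<eta> = \<Union>{msum m (\<lambda>i. esubdiff L (f i) (e i) x) | e.
                  (\<forall>i\<in>{1..m}. e i \<ge> 0) \<and> (\<Sum>i\<in>{1..m}. e i) = \<epsilon> + \<eta>}" for \<eta>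
  {
    assume l: "l \<in> (\<Inter>\<eta>\<in>{0<..}. L \<inter> closure (U \<eta>))"
    show "l \<in> esubdiff L (fsum m f) \<epsilon> x"
    proof (rule esub_eps[where g="fsum m f"])
      show "\<And>y. fsum m f y \<noteq> -\<infinity>" by (rule fsum_ninf)
      fix \<eta> :: real assume \<eta>: "\<eta> > 0"
      obtain C where C: "closed C" and SC: "esubdiff L (fsum m f) (\<epsilon> + \<eta>) x = L \<inter> C"
        using closed_sub by blast
      have "U \<eta> \<subseteq> esubdiff L (fsum m f) (\<epsilon> + \<eta>) x"
      proof
        fix l' assume "l' \<in> U \<eta>"
        then obtain e where e: "(\<forall>i\<in>{1..m}. e i \<ge> 0) \<and> (\<Sum>i\<in>{1..m}. e i) = \<epsilon> + \<eta>"
          and le: "l' \<in> msum m (\<lambda>i. esubdiff L (f i) (e i) x)" unfolding U_def by blast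
        then obtain v where v: "\<forall>i\<in>{1..m}. v i \<in> esubdiff L (f i) (e i) x" and lv: "l' = (\<Sum>i\<in>{1..m}. v i)"
          unfolding msum_def by blast
        show "l' \<in> esubdiff L (fsum m f) (\<epsilon> + \<eta>) x" using sub_sum[OF v] lv e by simp
      qed
      then have "closure (U \<eta>) \<subseteq> C" using SC C by (metis closure_minimal le_inf_iff)
      moreover have "l \<in> L \<inter> closure (U \<eta>)" using l \<eta> by auto
      ultimately show "l \<in> esubdiff L (fsum m f) (\<epsilon> + \<eta>) x" using SC by blast
    qed
  }
  {
    assume l: "l \<in> esubdiff L (fsum m f) \<epsilon> x"
    then have lL: "l \<in> L" and le: "fconj (fsum m f) l \<le> ereal (l x) - fsum m f x + ereal \<epsilon>"
      using esub_F by auto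
    obtain A where fx: "fsum m f x = ereal A" using fsum_real[OF x] by blast
    define r where "r = l x - A + \<epsilon>"
    have "(l, r) \<in> epi L (fconj (fsum m f))" unfolding epi_def r_def using lL le fx by simp
    then have lr: "(l, r) \<in> closure (msum m (\<lambda>i. epi L (fconj (f i))))" using cl by blast
    show "l \<in> (\<Inter>\<eta>\<in>{0<..}. L \<inter> closure (U \<eta>))"
    proof
      fix \<eta> :: real assume "\<eta> \<in> {0<..}"
      then have \<eta>: "\<eta> > 0" by simp
      have "l \<in> closure (U \<eta>)" unfolding closure_iff_nhds_not_empty
      proof (intro allI impI)
        fix T S assume ST: "S \<subseteq> T" and oS: "open S" and lS: "l \<in> S"
        define W where "W = (S \<inter> {l'. l x - \<eta> / 2 < l' x}) \<times> {s. s < r + \<eta> / 2}"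
        have oW: "open W" unfolding W_def
          by (intro open_Times open_Int oS open_gt_eval) (simp add: open_lessThan[unfolded lessThan_def])
        have lrW: "(l, r) \<in> W" unfolding W_def using lS \<eta> by simp
        have "msum m (\<lambda>i. epi L (fconj (f i))) \<inter> W \<noteq> {}"
          using lr oW lrW unfolding closure_iff_nhds_not_empty by blast
        then obtain p where pm: "p \<in> msum m (\<lambda>i. epi L (fconj (f i)))" and pW: "p \<in> W" by blast
        then obtain w where w: "\<forall>i\<in>{1..m}. w i \<in> epi L (fconj (f i))" and pw: "p = (\<Sum>i\<in>{1..m}. w i)"
          unfolding msum_def by blast
        define v where "v i = fst (w i)" for i
        define s where "s i = snd (w i)" for i
        have vL: "\<forall>i\<in>{1..m}. v i \<in> L" and vs: "\<forall>i\<in>{1..m}. fconj (f i) (v i) \<le> ereal (s i)"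
          using w unfolding epi_def v_def s_def by auto
        have fp: "fst p = (\<Sum>i\<in>{1..m}. v i)" unfolding pw v_def by (rule fst_sum)
        have sp: "snd p = (\<Sum>i\<in>{1..m}. s i)" unfolding pw s_def by (rule snd_sum)
        define l' where "l' = fst p"
        have l'S: "l' \<in> S" and l'x: "l x - \<eta> / 2 < l' x" and sr: "snd p < r + \<eta> / 2"
          using pW unfolding W_def l'_def by (auto simp: mem_Times_iff)
        have "infconv L m (\<lambda>i. fconj (f i)) l' \<le> (\<Sum>i\<in>{1..m}. fconj (f i) (v i))"
          unfolding infconv_def by (rule INF_lower) (use vL fp l'_def in auto)
        also have "\<dots> \<le> (\<Sum>i\<in>{1..m}. ereal (s i))" by (rule sum_mono) (use vs in auto)
        also have "\<dots> = ereal (snd p)" using sp by simp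
        also have "\<dots> < ereal (l' x - A + (\<epsilon> + \<eta>))" using sr l'x unfolding r_def by simp
        finally have "infconv L m (\<lambda>i. fconj (f i)) l' < ereal (l' x) - fsum m f x + ereal (\<epsilon> + \<eta>)"
          using fx by simp
        then obtain v' e where ve: "\<forall>i\<in>{1..m}. e i \<ge> 0 \<and> v' i \<in> esubdiff L (f i) (e i) x"
          and vs': "(\<Sum>i\<in>{1..m}. v' i) = l'" and es: "(\<Sum>i\<in>{1..m}. e i) = \<epsilon> + \<eta>"
          using decompose[OF x] by blast
        have "l' \<in> msum m (\<lambda>i. esubdiff L (f i) (e i) x)" unfolding msum_def using ve vs' by auto
        then have "l' \<in> U \<eta>" unfolding U_def using ve es by blast
        then show "U \<eta> \<inter> T \<noteq> {}" using l'S ST by blast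
      qed
      then show "l \<in> L \<inter> closure (U \<eta>)" using lL by simp
    qed
  }
qed

end

theorem mainTheorem11:
  fixes L :: "('a \<Rightarrow> real) set" and f :: "nat \<Rightarrow> 'a \<Rightarrow> ereal" and m :: nat
  assumes L_add: "\<And>l1 l2. l1 \<in> L \<Longrightarrow> l2 \<in> L \<Longrightarrow> (\<lambda>x. l1 x + l2 x) \<in> L"
    and L_scale: "\<And>c l. l \<in> L \<Longrightarrow> (\<lambda>x. c * l x) \<in> L"
    and m2: "m \<ge> 2"
    and f_ninf: "\<And>i x. i \<in> {1..m} \<Longrightarrow> f i x \<noteq> -\<infinity>"
    and dom_ne: "(\<Inter>i\<in>{1..m}. edom (f i)) \<noteq> {}"
  defines "P1 \<equiv> (\<exists>K>1. \<forall>x\<in>cdom m f. \<forall>\<epsilon>>0.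
              esubdiff L (fsum m f) \<epsilon> x \<subseteq> msum m (\<lambda>i. esubdiff L (f i) (K * \<epsilon>) x))"
    and "P2 \<equiv> (\<exists>K>0. \<forall>x\<in>cdom m f. \<forall>\<epsilon>>0.
              L \<inter> closure (msum m (\<lambda>i. esubdiff L (f i) \<epsilon> x))
                \<subseteq> msum m (\<lambda>i. esubdiff L (f i) (K * \<epsilon>) x))"
    and "P3 \<equiv> (\<forall>x. \<forall>\<epsilon>\<ge>0. esubdiff L (fsum m f) \<epsilon> x =
              (\<Inter>\<eta>\<in>{0<..}. \<Union>{msum m (\<lambda>i. esubdiff L (f i) (e i) x) | e.
                  (\<forall>i\<in>{1..m}. e i \<ge> 0) \<and> (\<Sum>i\<in>{1..m}. e i) = \<epsilon> + \<eta>}))"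
    and "P4 \<equiv> (\<forall>l\<in>L. fconj (fsum m f) l = infconv L m (\<lambda>i. fconj (f i)) l)"
    and "P5 \<equiv> lsc_on L (infconv L m (\<lambda>i. fconj (f i)))"
    and "H \<equiv> (\<forall>x\<in>cdom m f. \<forall>\<epsilon>\<ge>0. esubdiff L (fsum m f) \<epsilon> x =
              (\<Inter>\<eta>\<in>{0<..}. L \<inter> closure (\<Union>{msum m (\<lambda>i. esubdiff L (f i) (e i) x) | e.
                  (\<forall>i\<in>{1..m}. e i \<ge> 0) \<and> (\<Sum>i\<in>{1..m}. e i) = \<epsilon> + \<eta>})))"
  shows "(P1 \<longleftrightarrow> P3) \<and> (P3 \<longleftrightarrow> P4) \<and> (P4 \<longrightarrow> P5) \<and> (P5 \<longrightarrow> P2)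
         \<and> (H \<longrightarrow> (P2 \<longrightarrow> P1))
         \<and> ((L \<times> UNIV) \<inter> closure (msum m (\<lambda>i. epi L (fconj (f i)))) = epi L (fconj (fsum m f)) \<longrightarrow> H)"
  proof -
  interpret S: setting L f m using L_add f_ninf m2 by unfold_locales auto
  have dn: "cdom m f \<noteq> {}" using dom_ne by (simp add: cdom_def)
  have i14: "P1 \<Longrightarrow> P4" unfolding P1_def P4_def using S.p14[OF dn] by blast
  have i43: "P4 \<Longrightarrow> P3" unfolding P3_def P4_def using S.p43 by blast
  have i31: "P3 \<Longrightarrow> P1" unfolding P3_def P1_def using S.p31 by blast
  have i45: "P4 \<Longrightarrow> P5" unfolding P5_def P4_def using S.p45 by blast
  have i52: "P5 \<Longrightarrow> P2" unfolding P5_def P2_def using S.p52 by blast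
  have iH: "H \<Longrightarrow> P2 \<Longrightarrow> P1" unfolding H_def P2_def P1_def using S.pH by blast
  have iE: "(L \<times> UNIV) \<inter> closure (msum m (\<lambda>i. epi L (fconj (f i)))) = epi L (fconj (fsum m f)) \<Longrightarrow> H"
    unfolding H_def using S.pE by blast
  show ?thesis using i14 i43 i31 i45 i52 iH iE by blast
qed

end
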